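(* Let $G$ be a group endowed with a topology (no compatibility between the group structure and the topology is assumed). Suppose there exists an integer $c>0$ such that every solvable subgroup of $G$ has derived length at most $c$. Then every solvable (resp. connected solvable) subgroup of $G$ is contained in a maximal solvable (resp. maximal connected solvable) subgroup of $G$.
   Context: Derived length of a solvable group $H$: the least $k$ with $D^k(H)=\{1\}$, where $D^0(H)=H$ and $D^{k}(H)$ is the commutator subgroup of $D^{k-1}(H)$. A subgroup is connected if it is connected for the induced topology. *)

theory Defs
  imports "HOL-Analysis.Analysis" "HOL-Algebra.Solvable_Groups"
begin

definition solvable_subgroup :: "('a, 'b) monoid_scheme \<Rightarrow> 'a set \<Rightarrow> bool" where
  "solvable_subgroup G H \<longleftrightarrow> subgroup H G \<and> solvable (G\<lparr>carrier := H\<rparr>)"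

definition derived_length :: "('a, 'b) monoid_scheme \<Rightarrow> 'a set \<Rightarrow> nat" where
  "derived_length G H = (LEAST k. (derived G ^^ k) H = {\<one>\<^bsub>G\<^esub>})"

end

theory Submission
  imports Defs
begin

context group
begin

lemma chain_Union_subgroup:
  assumes "D \<noteq> {}" "\<And>K. K \<in> D \<Longrightarrow> subgroup K G" "chain\<^sub>\<subseteq> D"
  shows "subgroup (\<Union>D) G"
proof
  show "\<Union>D \<subseteq> carrier G" using assms(2) subgroup.subset by blast
  show "\<one> \<in> \<Union>D" using assms(1,2) subgroup.one_closed by blast
  fix x assume "x \<in> \<Union>D"
  then obtain A where "A \<in> D" "x \<in> A" by blast
  hence "inv x \<in> A" using subgroup.m_inv_closed[OF assms(2)] by blast
  thus "inv x \<in> \<Union>D" using \<open>A \<in> D\<close> by blast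
next
  fix x y assume "x \<in> \<Union>D" "y \<in> \<Union>D"
  then obtain A B where AB: "A \<in> D" "x \<in> A" "B \<in> D" "y \<in> B" by blast
  from assms(3) AB have "A \<subseteq> B \<or> B \<subseteq> A" unfolding chain_subset_def by blast
  thus "x \<otimes> y \<in> \<Union>D"
  proof
    assume "A \<subseteq> B"
    hence "x \<otimes> y \<in> B" using AB subgroup.m_closed[OF assms(2)[OF AB(3)]] by blast
    thus ?thesis using AB(3) by blast
  next
    assume "B \<subseteq> A"
    hence "x \<otimes> y \<in> A" using AB subgroup.m_closed[OF assms(2)[OF AB(1)]] by blast
    thus ?thesis using AB(1) by blast
  qed
qed

lemma derived_chain_Union:
  assumes "D \<noteq> {}" "\<And>K. K \<in> D \<Longrightarrow> subgroup K G" "chain\<^sub>\<subseteq> D"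
  shows "derived G (\<Union>D) \<subseteq> \<Union>(derived G ` D)"
proof -
  have ch: "chain\<^sub>\<subseteq> (derived G ` D)"
    unfolding chain_subset_def
  proof (intro ballI)
    fix X Y assume "X \<in> derived G ` D" "Y \<in> derived G ` D"
    then obtain A B where AB: "A \<in> D" "B \<in> D" "X = derived G A" "Y = derived G B" by blast
    from assms(3) AB(1,2) have "A \<subseteq> B \<or> B \<subseteq> A" unfolding chain_subset_def by blast
    thus "X \<subseteq> Y \<or> Y \<subseteq> X" using mono_derived AB(3,4) by metis
  qed
  have sg: "subgroup (\<Union>(derived G ` D)) G"
  proof (rule chain_Union_subgroup[OF _ _ ch])
    show "derived G ` D \<noteq> {}" using assms(1) by simp
    fix K assume "K \<in> derived G ` D"
    then obtain A where A: "A \<in> D" "K = derived G A" by blast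
    show "subgroup K G" using derived_is_subgroup[OF subgroup.subset[OF assms(2)[OF A(1)]]] A(2) by simp
  qed
  have "derived_set G (\<Union>D) \<subseteq> \<Union>(derived G ` D)"
  proof
    fix z assume "z \<in> derived_set G (\<Union>D)"
    then obtain h1 h2 A B where AB: "A \<in> D" "h1 \<in> A" "B \<in> D" "h2 \<in> B"
      and z: "z = h1 \<otimes> h2 \<otimes> inv h1 \<otimes> inv h2" by blast
    from assms(3) AB have "A \<subseteq> B \<or> B \<subseteq> A" unfolding chain_subset_def by blast
    then obtain C where C: "C \<in> D" "h1 \<in> C" "h2 \<in> C"
    proof
      assume "A \<subseteq> B" thus ?thesis using that[of B] AB by blast
    next
      assume "B \<subseteq> A" thus ?thesis using that[of A] AB by blast
    qed
    hence "z \<in> derived_set G C" using z by blast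
    hence "z \<in> derived G C" unfolding derived_def by (rule generate.incl)
    thus "z \<in> \<Union>(derived G ` D)" using C by blast
  qed
  hence "generate G (derived_set G (\<Union>D)) \<subseteq> \<Union>(derived G ` D)"
    by (rule generate_subgroup_incl[OF _ sg])
  thus ?thesis unfolding derived_def[of G "\<Union>D"] .
qed

lemma exp_derived_chain_Union:
  assumes "D \<noteq> {}" "\<And>K. K \<in> D \<Longrightarrow> subgroup K G" "chain\<^sub>\<subseteq> D"
  shows "(derived G ^^ n) (\<Union>D) \<subseteq> \<Union>((derived G ^^ n) ` D)"
proof (induction n)
  case 0 thus ?case by simp
next
  case (Suc n)
  have ch: "chain\<^sub>\<subseteq> ((derived G ^^ n) ` D)"
    unfolding chain_subset_def
  proof (intro ballI)
    fix X Y assume "X \<in> (derived G ^^ n) ` D" "Y \<in> (derived G ^^ n) ` D"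
    then obtain A B where AB: "A \<in> D" "B \<in> D" "X = (derived G ^^ n) A" "Y = (derived G ^^ n) B" by blast
    from assms(3) AB(1,2) have "A \<subseteq> B \<or> B \<subseteq> A" unfolding chain_subset_def by blast
    thus "X \<subseteq> Y \<or> Y \<subseteq> X" using mono_exp_of_derived AB(3,4) by metis
  qed
  have "(derived G ^^ Suc n) (\<Union>D) = derived G ((derived G ^^ n) (\<Union>D))" by simp
  also have "\<dots> \<subseteq> derived G (\<Union>((derived G ^^ n) ` D))" using Suc mono_derived by blast
  also have "\<dots> \<subseteq> \<Union>(derived G ` ((derived G ^^ n) ` D))"
  proof (rule derived_chain_Union[OF _ _ ch])
    show "(derived G ^^ n) ` D \<noteq> {}" using assms(1) by simp
    fix K assume "K \<in> (derived G ^^ n) ` D"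
    then obtain A where A: "A \<in> D" "K = (derived G ^^ n) A" by blast
    show "subgroup K G" using exp_of_derived_is_subgroup[OF assms(2)[OF A(1)]] A(2) by simp
  qed
  also have "\<dots> = \<Union>((derived G ^^ Suc n) ` D)"
    by (simp only: funpow.simps(2) image_comp)
  finally show ?case .
qed

lemma exp_derived_incl:
  assumes "K \<subseteq> H" "subgroup H G" shows "(derived G ^^ n) K \<subseteq> H"
  using assms by (induct n) (auto dest: derived_incl[rotated])

lemma solvable_subgroup_iff:
  "solvable_subgroup G H \<longleftrightarrow> subgroup H G \<and> (\<exists>n. (derived G ^^ n) H = {\<one>})"
proof (cases "subgroup H G")
  case True
  interpret H: group "G\<lparr>carrier := H\<rparr>" using subgroup_imp_group[OF True] .
  have eq: "(derived (G\<lparr>carrier := H\<rparr>) ^^ n) H = (derived G ^^ n) H" for n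
  proof (induction n)
    case 0 thus ?case by simp
  next
    case (Suc n)
    have "(derived G ^^ n) H \<subseteq> H" using exp_derived_incl[OF subset_refl True] .
    thus ?case using Suc derived_consistent[OF _ True] by simp
  qed
  show ?thesis unfolding solvable_subgroup_def
    using True H.solvable_iff_trivial_derived_seq eq by simp
qed (simp add: solvable_subgroup_def)

end

lemma (in group) zorn_part:
  assumes bound: "\<forall>H. solvable_subgroup G H \<longrightarrow> derived_length G H \<le> c"
    and H: "solvable_subgroup G H" "Q H"
    and Qch: "\<And>C. C \<noteq> {} \<Longrightarrow> chain\<^sub>\<subseteq> C \<Longrightarrow> (\<And>M. M \<in> C \<Longrightarrow> H \<subseteq> M \<and> Q M) \<Longrightarrow> Q (\<Union>C)"
  shows "\<exists>M. H \<subseteq> M \<and> solvable_subgroup G M \<and> Q M \<and>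
           (\<forall>K. solvable_subgroup G K \<and> Q K \<and> M \<subseteq> K \<longrightarrow> K = M)"
proof -
  have triv: "(derived G ^^ c) M = {\<one>}" if "solvable_subgroup G M" for M
  proof -
    from that obtain n where sg: "subgroup M G" and n: "(derived G ^^ n) M = {\<one>}"
      using solvable_subgroup_iff by blast
    define L where "L = derived_length G M"
    have L: "(derived G ^^ L) M = {\<one>}" unfolding L_def derived_length_def
      using n by (rule LeastI)
    have "L \<le> c" using bound that L_def by blast
    hence "(derived G ^^ c) M = (derived G ^^ (c - L)) ((derived G ^^ L) M)"
      by (metis funpow_add le_add_diff_inverse2 o_apply)
    also have "\<dots> = (derived G ^^ (c - L)) {\<one>}" using L by simp
    also have "\<dots> \<subseteq> {\<one>}" using exp_derived_incl[OF subset_refl triv_subgroup] .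
    finally show ?thesis
      using subgroup.one_closed[OF exp_of_derived_is_subgroup[OF sg, of c]] by blast
  qed
  define A where "A = {M. H \<subseteq> M \<and> solvable_subgroup G M \<and> Q M}"
  have "\<forall>C\<in>chains A. \<exists>U\<in>A. \<forall>X\<in>C. X \<subseteq> U"
  proof (rule ballI)
    fix C assume C: "C \<in> chains A"
    show "\<exists>U\<in>A. \<forall>X\<in>C. X \<subseteq> U"
    proof (cases "C = {}")
      case True thus ?thesis using H unfolding A_def by blast
    next
      case False
      have CA: "C \<subseteq> A" and ch: "chain\<^sub>\<subseteq> C" using C unfolding chains_def by auto
      have sgs: "\<And>K. K \<in> C \<Longrightarrow> subgroup K G" using CA unfolding A_def solvable_subgroup_def by blast
      have sgU: "subgroup (\<Union>C) G" using chain_Union_subgroup[OF False sgs ch] .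
      have "(derived G ^^ c) (\<Union>C) \<subseteq> \<Union>((derived G ^^ c) ` C)"
        using exp_derived_chain_Union[OF False sgs ch] .
      also have "\<dots> \<subseteq> {\<one>}" using CA triv unfolding A_def by auto
      finally have "(derived G ^^ c) (\<Union>C) = {\<one>}"
        using subgroup.one_closed[OF exp_of_derived_is_subgroup[OF sgU, of c]] by blast
      hence "solvable_subgroup G (\<Union>C)" using solvable_subgroup_iff sgU by blast
      moreover have "Q (\<Union>C)"
        by (rule Qch[OF False ch]) (use CA in \<open>auto simp: A_def\<close>)
      moreover have "H \<subseteq> \<Union>C" using False CA unfolding A_def by blast
      ultimately show ?thesis unfolding A_def by blast
    qed
  qed
  then obtain M where M: "M \<in> A" "\<forall>X\<in>A. M \<subseteq> X \<longrightarrow> X = M" using Zorn_Lemma2[of A] by blast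
  show ?thesis
    apply (rule exI[of _ M])
    using M unfolding A_def by auto
qed

theorem proposition3p10:
  fixes G :: "('a, 'b) monoid_scheme" and T :: "'a topology" and c :: nat
  assumes "group G"
    and "topspace T = carrier G"
    and "c > 0"
    and "\<forall>H. solvable_subgroup G H \<longrightarrow> derived_length G H \<le> c"
  shows "(\<forall>H. solvable_subgroup G H \<longrightarrow>
            (\<exists>M. H \<subseteq> M \<and> solvable_subgroup G M \<and>
                 (\<forall>K. solvable_subgroup G K \<and> M \<subseteq> K \<longrightarrow> K = M)))
       \<and> (\<forall>H. solvable_subgroup G H \<and> connectedin T H \<longrightarrow>
            (\<exists>M. H \<subseteq> M \<and> solvable_subgroup G M \<and> connectedin T M \<and>
                 (\<forall>K. solvable_subgroup G K \<and> connectedin T K \<and> M \<subseteq> K \<longrightarrow> K = M)))"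
proof (intro conjI allI impI)
  fix H assume H: "solvable_subgroup G H"
  show "\<exists>M. H \<subseteq> M \<and> solvable_subgroup G M \<and>
                 (\<forall>K. solvable_subgroup G K \<and> M \<subseteq> K \<longrightarrow> K = M)"
    using group.zorn_part[OF assms(1) assms(4) H, of "\<lambda>_. True"] by simp
next
  fix H assume H: "solvable_subgroup G H \<and> connectedin T H"
  have ne: "H \<noteq> {}" using H subgroup.one_closed unfolding solvable_subgroup_def by blast
  show "\<exists>M. H \<subseteq> M \<and> solvable_subgroup G M \<and> connectedin T M \<and>
                 (\<forall>K. solvable_subgroup G K \<and> connectedin T K \<and> M \<subseteq> K \<longrightarrow> K = M)"
  proof (rule group.zorn_part[OF assms(1) assms(4), of H "connectedin T"])
    fix C assume C: "C \<noteq> {}" "chain\<^sub>\<subseteq> C" "\<And>M. M \<in> C \<Longrightarrow> H \<subseteq> M \<and> connectedin T M"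
    have "H \<subseteq> \<Inter>C" using C by blast
    hence "\<Inter>C \<noteq> {}" using ne by blast
    thus "connectedin T (\<Union>C)" using connectedin_Union C by blast
  qed (use H in simp_all)
qed

end
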